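(* Let $\zeta$ be a smooth divergence-free unit vector field on $\mathbb{S}^3$ whose integral curves are great circles, and let $\omega$ be the dual 1-form, $\omega(a)=\langle\zeta,a\rangle$. Then $\omega\wedge d\omega$ vanishes nowhere, i.e. $\omega$ is a contact form on $\mathbb{S}^3$.
   Context: $\mathbb{S}^3\subset\mathbb{R}^4$ with its round metric $\langle\cdot,\cdot\rangle$. *)

theory Defs
  imports "HOL-Analysis.Analysis"
begin

text \<open>Ambient space R^4 and the unit sphere S^3 = sphere 0 1.
  A vector field on S^3 is represented by a map zeta on R^4; only its values on
  (a neighbourhood of) the sphere matter.\<close>

fun Ck_on :: "nat \<Rightarrow> 'a::euclidean_space set \<Rightarrow> ('a \<Rightarrow> 'b::real_normed_vector) \<Rightarrow> bool" where
  "Ck_on 0 U f = continuous_on U f"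
| "Ck_on (Suc k) U f =
     (f differentiable_on U \<and> (\<forall>v. Ck_on k U (\<lambda>x. frechet_derivative f (at x) v)))"

definition smooth_on :: "'a::euclidean_space set \<Rightarrow> ('a \<Rightarrow> 'b::real_normed_vector) \<Rightarrow> bool" where
  "smooth_on U f \<longleftrightarrow> (\<forall>k. Ck_on k U f)"

definition smooth_unit_vf_S3 :: "(real^4 \<Rightarrow> real^4) \<Rightarrow> bool" where
  "smooth_unit_vf_S3 \<zeta> \<longleftrightarrow>
     (\<exists>U. open U \<and> sphere 0 1 \<subseteq> U \<and> smooth_on U \<zeta>) \<and>
     (\<forall>x\<in>sphere 0 1. \<zeta> x \<bullet> x = 0 \<and> norm (\<zeta> x) = 1)"

text \<open>Riemannian divergence on S^3 at x: sum over an orthonormal basis e_i of the tangent space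
  of <nabla_{e_i} zeta, e_i>, written as the trace of the ambient derivative minus its
  normal-normal component (this only involves tangential derivatives).\<close>
definition sphere_div :: "(real^4 \<Rightarrow> real^4) \<Rightarrow> real^4 \<Rightarrow> real" where
  "sphere_div \<zeta> x =
     (\<Sum>b\<in>Basis. frechet_derivative \<zeta> (at x) b \<bullet> b) - frechet_derivative \<zeta> (at x) x \<bullet> x"

text \<open>Integral curves on S^3 (maximal ones are defined on all of R since S^3 is compact).\<close>
definition integral_curve_S3 :: "(real^4 \<Rightarrow> real^4) \<Rightarrow> (real \<Rightarrow> real^4) \<Rightarrow> bool" where
  "integral_curve_S3 \<zeta> \<gamma> \<longleftrightarrow>
     (\<forall>t. \<gamma> t \<in> sphere 0 1 \<and> (\<gamma> has_vector_derivative \<zeta> (\<gamma> t)) (at t))"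

definition great_circle :: "(real^4) set \<Rightarrow> bool" where
  "great_circle C \<longleftrightarrow> (\<exists>P. subspace P \<and> dim P = 2 \<and> C = sphere 0 1 \<inter> P)"

definition dual_form :: "(real^4 \<Rightarrow> real^4) \<Rightarrow> real^4 \<Rightarrow> real^4 \<Rightarrow> real" where
  "dual_form \<zeta> x a = \<zeta> x \<bullet> a"

definition d_dual_form :: "(real^4 \<Rightarrow> real^4) \<Rightarrow> real^4 \<Rightarrow> real^4 \<Rightarrow> real^4 \<Rightarrow> real" where
  "d_dual_form \<zeta> x v w =
     frechet_derivative \<zeta> (at x) v \<bullet> w - frechet_derivative \<zeta> (at x) w \<bullet> v"

definition omega_wedge_domega ::
  "(real^4 \<Rightarrow> real^4) \<Rightarrow> real^4 \<Rightarrow> real^4 \<Rightarrow> real^4 \<Rightarrow> real^4 \<Rightarrow> real" where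
  "omega_wedge_domega \<zeta> x u v w =
     dual_form \<zeta> x u * d_dual_form \<zeta> x v w
   - dual_form \<zeta> x v * d_dual_form \<zeta> x u w
   + dual_form \<zeta> x w * d_dual_form \<zeta> x u v"

definition wedge_nonzero_at :: "(real^4 \<Rightarrow> real^4) \<Rightarrow> real^4 \<Rightarrow> bool" where
  "wedge_nonzero_at \<zeta> x \<longleftrightarrow>
     (\<exists>u v w. u \<bullet> x = 0 \<and> v \<bullet> x = 0 \<and> w \<bullet> x = 0 \<and> omega_wedge_domega \<zeta> x u v w \<noteq> 0)"

end

theory Submission
  imports Defs "HOL-Analysis.Analysis"
begin


primrec picard :: "('a::euclidean_space \<Rightarrow> 'a) \<Rightarrow> 'a \<Rightarrow> nat \<Rightarrow> real \<Rightarrow> 'a" where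
  "picard F x0 0 = (\<lambda>t. x0)"
| "picard F x0 (Suc n) = (\<lambda>t. x0 + integral {0..t} (\<lambda>s. F (picard F x0 n s)))"

lemma picard_cont:
  assumes "continuous_on UNIV F"
  shows "continuous_on {0..T} (picard F x0 n)"
proof (induction n)
  case 0 then show ?case by simp
next
  case (Suc n)
  have "continuous_on {0..T} (\<lambda>s. F (picard F x0 n s))"
    by (rule continuous_on_compose2[OF assms Suc]) auto
  then have "(\<lambda>s. F (picard F x0 n s)) integrable_on {0..T}"
    by (rule integrable_continuous_real)
  then have "continuous_on {0..T} (\<lambda>t. integral {0..t} (\<lambda>s. F (picard F x0 n s)))"
    by (rule indefinite_integral_continuous_1)
  then show ?case by (auto intro!: continuous_intros)
qed

lemma int_pow:
  assumes "0 \<le> t"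
  shows "integral {0..t} (\<lambda>s. c * s ^ n) = c * t ^ Suc n / Suc n"
proof -
  have "((\<lambda>s. c * s ^ n) has_integral (c * t ^ Suc n / Suc n - c * 0 ^ Suc n / Suc n)) {0..t}"
    apply (rule fundamental_theorem_of_calculus[OF assms])
    apply (auto intro!: derivative_eq_intros simp: has_real_derivative_iff_has_vector_derivative[symmetric])
    apply (cases n) apply (auto simp: field_simps)
    done
  then show ?thesis by (metis integral_unique diff_zero zero_power mult_zero_right div_0 zero_less_Suc)
qed

lemma picard_bound:
  assumes L: "K-lipschitz_on UNIV F" and t: "0 \<le> t"
  shows "norm (picard F x0 (Suc n) t - picard F x0 n t) \<le> norm (F x0) * K^n * t^(Suc n) / fact (Suc n)"
  using t
proof (induction n arbitrary: t)
  case 0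
  then show ?case by (simp add: integral_const_real)
next
  case (Suc n)
  have cF: "continuous_on UNIV F" using L lipschitz_on_continuous_on by blast
  have K: "0 \<le> K" using L lipschitz_on_nonneg by blast
  define g where "g = (\<lambda>s. F (picard F x0 (Suc n) s) - F (picard F x0 n s))"
  have ci: "\<And>m. (\<lambda>s. F (picard F x0 m s)) integrable_on {0..t}"
    by (rule integrable_continuous_real, rule continuous_on_compose2[OF cF picard_cont[OF cF]]) auto
  have h: "integral {0..t} g = integral {0..t} (\<lambda>s. F (picard F x0 (Suc n) s)) - integral {0..t} (\<lambda>s. F (picard F x0 n s))"
    unfolding g_def by (rule integral_diff[OF ci ci])
  have eq: "picard F x0 (Suc (Suc n)) t - picard F x0 (Suc n) t = integral {0..t} g"
    unfolding h by simp
  have "norm (integral {0..t} g) \<le> integral {0..t} (\<lambda>s. (K * (norm (F x0) * K^n / fact (Suc n))) * s^(Suc n))"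
  proof (rule integral_norm_bound_integral)
    show "g integrable_on {0..t}" unfolding g_def by (rule integrable_diff[OF ci ci])
    show "(\<lambda>s. (K * (norm (F x0) * K^n / fact (Suc n))) * s^(Suc n)) integrable_on {0..t}"
      by (rule integrable_continuous_real) (auto intro!: continuous_intros)
    fix s assume s: "s \<in> {0..t}"
    have "norm (g s) \<le> K * norm (picard F x0 (Suc n) s - picard F x0 n s)"
      unfolding g_def using lipschitz_onD[OF L] by (simp add: dist_norm)
    also have "\<dots> \<le> K * (norm (F x0) * K^n * s^(Suc n) / fact (Suc n))"
      using Suc.IH[of s] s K by (intro mult_left_mono) auto
    finally show "norm (g s) \<le> (K * (norm (F x0) * K^n / fact (Suc n))) * s^(Suc n)"
      by (simp add: field_simps)
  qed
  also have "\<dots> = (K * (norm (F x0) * K^n / fact (Suc n))) * t ^ Suc (Suc n) / Suc (Suc n)"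
    using Suc.prems by (rule int_pow)
  also have "\<dots> = norm (F x0) * K^(Suc n) * t^(Suc (Suc n)) / fact (Suc (Suc n))"
    by (simp add: field_simps)
  finally show ?case using eq by simp
qed

definition picard_lim :: "('a::euclidean_space \<Rightarrow> 'a) \<Rightarrow> 'a \<Rightarrow> real \<Rightarrow> 'a" where
  "picard_lim F x0 t = x0 + suminf (\<lambda>k. picard F x0 (Suc k) t - picard F x0 k t)"

lemma picard_unif:
  assumes L: "K-lipschitz_on UNIV F" and T: "0 \<le> T"
  shows "uniform_limit {0..T} (picard F x0) (picard_lim F x0) sequentially"
proof -
  have K: "0 \<le> K" using L lipschitz_on_nonneg by blast
  define M where "M = (\<lambda>k. norm (F x0) * K^k * T^(Suc k) / fact (Suc k))"
  have bd: "norm (picard F x0 (Suc k) t - picard F x0 k t) \<le> M k" if "t \<in> {0..T}" for k t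
  proof -
    have "norm (picard F x0 (Suc k) t - picard F x0 k t) \<le> norm (F x0) * K^k * t^(Suc k) / fact (Suc k)"
      using picard_bound[OF L] that by auto
    also have "\<dots> \<le> M k" unfolding M_def using that K
      by (intro divide_right_mono mult_left_mono power_mono) auto
    finally show ?thesis .
  qed
  have sM: "summable M"
  proof (rule summable_comparison_test[where g = "\<lambda>k. (norm (F x0) * T) * (inverse (fact k) * (K*T)^k)"])
    show "summable (\<lambda>k. (norm (F x0) * T) * (inverse (fact k) * (K*T)^k))"
      by (intro summable_mult summable_exp)
    have "norm (M k) \<le> (norm (F x0) * T) * (inverse (fact k) * (K*T)^k)" for k
    proof -
      have "norm (M k) = norm (F x0) * K^k * T^(Suc k) / fact (Suc k)"
        unfolding M_def using K T by simp
      also have "\<dots> \<le> norm (F x0) * K^k * T^(Suc k) / fact k"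
        using K T by (intro divide_left_mono) (auto simp: fact_mono)
      also have "\<dots> = (norm (F x0) * T) * (inverse (fact k) * (K*T)^k)"
        by (simp add: field_simps power_mult_distrib)
      finally show ?thesis .
    qed
    then show "\<exists>N. \<forall>n\<ge>N. norm (M n) \<le> (norm (F x0) * T) * (inverse (fact n) * (K*T)^n)" by blast
  qed
  have W: "uniform_limit {0..T} (\<lambda>n t. \<Sum>k<n. picard F x0 (Suc k) t - picard F x0 k t)
      (\<lambda>t. suminf (\<lambda>k. picard F x0 (Suc k) t - picard F x0 k t)) sequentially"
    by (rule Weierstrass_m_test[OF bd sM])
  have "uniform_limit {0..T} (\<lambda>n t. x0 + (\<Sum>k<n. picard F x0 (Suc k) t - picard F x0 k t))
      (\<lambda>t. x0 + suminf (\<lambda>k. picard F x0 (Suc k) t - picard F x0 k t)) sequentially"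
    by (intro uniform_limit_add[OF uniform_limit_const W])
  moreover have "(\<lambda>n t. x0 + (\<Sum>k<n. picard F x0 (Suc k) t - picard F x0 k t)) = picard F x0"
  proof -
    have "x0 + (\<Sum>k<n. picard F x0 (Suc k) t - picard F x0 k t) = picard F x0 n t" for n t
      using sum_lessThan_telescope[of "\<lambda>k. picard F x0 k t" n] by (simp del: picard.simps(2))
    then show ?thesis by (simp del: picard.simps(2) add: fun_eq_iff)
  qed
  ultimately show ?thesis unfolding picard_lim_def by simp
qed

lemma picard_lim_cont:
  assumes L: "K-lipschitz_on UNIV F" and T: "0 \<le> T"
  shows "continuous_on {0..T} (picard_lim F x0)"
proof (rule uniform_limit_theorem[OF _ picard_unif[OF L T]])
  have cF: "continuous_on UNIV F" using L lipschitz_on_continuous_on by blast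
  show "\<forall>\<^sub>F n in sequentially. continuous_on {0..T} (picard F x0 n)"
    using picard_cont[OF cF] by simp
qed simp

lemma picard_lim_eq:
  assumes L: "K-lipschitz_on UNIV F" and t: "0 \<le> t"
  shows "picard_lim F x0 t = x0 + integral {0..t} (\<lambda>s. F (picard_lim F x0 s))"
proof -
  have K: "0 \<le> K" using L lipschitz_on_nonneg by blast
  have cF: "continuous_on UNIV F" using L lipschitz_on_continuous_on by blast
  have U: "uniform_limit {0..t} (picard F x0) (picard_lim F x0) sequentially"
    by (rule picard_unif[OF L t])
  have UF: "uniform_limit {0..t} (\<lambda>n s. F (picard F x0 n s)) (\<lambda>s. F (picard_lim F x0 s)) sequentially"
  proof (rule uniform_limitI)
    fix e :: real assume e: "0 < e"
    then have "e / (K+1) > 0" using K by simp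
    from uniform_limitD[OF U this]
    show "\<forall>\<^sub>F n in sequentially. \<forall>x\<in>{0..t}. dist (F (picard F x0 n x)) (F (picard_lim F x0 x)) < e"
    proof eventually_elim
      case (elim n)
      show ?case
      proof
        fix x assume x: "x \<in> {0..t}"
        have "dist (F (picard F x0 n x)) (F (picard_lim F x0 x)) \<le> K * dist (picard F x0 n x) (picard_lim F x0 x)"
          using lipschitz_onD[OF L] by simp
        also have "\<dots> \<le> K * (e / (K+1))" using elim x K by (intro mult_left_mono) (auto intro: less_imp_le)
        also have "\<dots> < e" using K e by (simp add: field_simps)
        finally show "dist (F (picard F x0 n x)) (F (picard_lim F x0 x)) < e" .
      qed
    qed
  qed
  obtain I J where I: "\<And>n. ((\<lambda>s. F (picard F x0 n s)) has_integral I n) {0..t}"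
    and J: "((\<lambda>s. F (picard_lim F x0 s)) has_integral J) {0..t}" and IJ: "I \<longlonglongrightarrow> J"
    by (rule uniform_limit_integral[OF UF]) (auto intro!: continuous_on_compose2[OF cF picard_cont[OF cF]])
  have "(\<lambda>n. picard F x0 (Suc n) t) \<longlonglongrightarrow> x0 + J"
  proof -
    have "\<And>n. integral {0..t} (\<lambda>s. F (picard F x0 n s)) = I n" using I integral_unique by blast
    then show ?thesis using tendsto_add[OF tendsto_const IJ, of x0] by simp
  qed
  moreover have "(\<lambda>n. picard F x0 (Suc n) t) \<longlonglongrightarrow> picard_lim F x0 t"
    using LIMSEQ_Suc[OF tendsto_uniform_limitI[OF U, of t]] t by (simp del: picard.simps(2))
  ultimately have "picard_lim F x0 t = x0 + J" using LIMSEQ_unique by blast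
  then show ?thesis using J by (simp add: integral_unique)
qed

lemma picard_deriv:
  assumes L: "K-lipschitz_on UNIV F" and t: "0 \<le> t"
  shows "(picard_lim F x0 has_vector_derivative F (picard_lim F x0 t)) (at t within {0..})"
proof -
  have cF: "continuous_on UNIV F" using L lipschitz_on_continuous_on by blast
  have c: "continuous_on {0..t+1} (\<lambda>s. F (picard_lim F x0 s))"
    by (rule continuous_on_compose2[OF cF picard_lim_cont[OF L]]) (use t in auto)
  have "((\<lambda>u. x0 + integral {0..u} (\<lambda>s. F (picard_lim F x0 s))) has_vector_derivative F (picard_lim F x0 t)) (at t within {0..t+1})"
    using integral_has_vector_derivative[OF c, of t] t
    by (auto intro!: derivative_eq_intros)
  then have "(picard_lim F x0 has_vector_derivative F (picard_lim F x0 t)) (at t within {0..t+1})"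
    by (rule has_vector_derivative_transform_within[where d=1]) (use t picard_lim_eq[OF L] in auto)
  moreover have "at t within {0..t+1} = at t within {0..}"
    by (rule at_within_nhd[where S="{t-1<..<t+1}"]) auto
  ultimately show ?thesis by simp
qed

lemma picard_lim_0: "picard_lim F x0 0 = x0"
proof -
  have "picard F x0 (Suc k) 0 - picard F x0 k 0 = 0" for k
    by (cases k) auto
  then show ?thesis unfolding picard_lim_def by simp
qed

lemma global_sol:
  fixes F :: "'a::euclidean_space \<Rightarrow> 'a"
  assumes L: "K-lipschitz_on UNIV F"
  shows "\<exists>\<gamma>. \<gamma> 0 = x0 \<and> (\<forall>t. (\<gamma> has_vector_derivative F (\<gamma> t)) (at t))"
proof -
  define \<alpha> where "\<alpha> = picard_lim F x0"
  define \<beta> where "\<beta> = picard_lim (\<lambda>y. - F y) x0"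
  have L': "K-lipschitz_on UNIV (\<lambda>y. - F y)" using L by (simp add: lipschitz_on_minus)
  have a: "(\<alpha> has_vector_derivative F (\<alpha> t)) (at t within {0..})" if "0 \<le> t" for t
    unfolding \<alpha>_def by (rule picard_deriv[OF L that])
  have b: "(\<beta> has_vector_derivative - F (\<beta> t)) (at t within {0..})" if "0 \<le> t" for t
    unfolding \<beta>_def by (rule picard_deriv[OF L' that])
  have g: "((\<lambda>s. \<beta> (- s)) has_vector_derivative F (\<beta> (- t))) (at t within {..0})" if "t \<le> 0" for t
  proof -
    have "(uminus has_vector_derivative (-1)) (at t within {..0})"
      by (auto intro!: derivative_eq_intros)
    moreover have "(\<beta> has_vector_derivative - F (\<beta> (-t))) (at (uminus t) within uminus ` {..0})"
    proof -
      have "uminus ` {..0::real} = {0..}" by (auto simp: image_iff intro: exI[where x="- _"])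
      then show ?thesis using b[of "-t"] that by simp
    qed
    ultimately have "((\<beta> \<circ> uminus) has_vector_derivative (-1) *\<^sub>R - F (\<beta> (-t))) (at t within {..0})"
      by (rule vector_diff_chain_within)
    then show ?thesis by (simp add: o_def)
  qed
  define \<gamma> where "\<gamma> = (\<lambda>t. if t \<in> {0::real..} then \<alpha> t else \<beta> (- t))"
  have "(\<gamma> has_vector_derivative (if t \<in> {0..} then F (\<alpha> t) else F (\<beta> (- t)))) (at t within UNIV)" for t
    unfolding \<gamma>_def
  proof (rule has_vector_derivative_If_within_closures[where T="{..0}"])
    show "t \<in> {0..} \<union> {..0}" by auto
    show "UNIV = {0::real..} \<union> {..0}" by auto
    show "t \<in> {0..} \<union> closure {0..} \<inter> closure {..0} \<Longrightarrow>
      (\<alpha> has_vector_derivative F (\<alpha> t)) (at t within {0..} \<union> closure {0..} \<inter> closure {..0})"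
      using a[of t] by (auto simp: Un_absorb2)
    show "t \<in> {..0} \<union> closure {0..} \<inter> closure {..0} \<Longrightarrow>
      ((\<lambda>s. \<beta> (- s)) has_vector_derivative F (\<beta> (- t))) (at t within {..0} \<union> closure {0..} \<inter> closure {..0})"
      using g[of t] by (auto simp: Un_absorb2)
    show "t \<in> closure {0..} \<Longrightarrow> t \<in> closure {..0} \<Longrightarrow> \<alpha> t = \<beta> (- t)"
      by (simp add: \<alpha>_def \<beta>_def picard_lim_0)
    show "t \<in> closure {0..} \<Longrightarrow> t \<in> closure {..0} \<Longrightarrow> F (\<alpha> t) = F (\<beta> (- t))"
      by (simp add: \<alpha>_def \<beta>_def picard_lim_0)
  qed
  then have "(\<gamma> has_vector_derivative F (\<gamma> t)) (at t)" for t
  proof -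
    assume h: "\<And>t. (\<gamma> has_vector_derivative (if t \<in> {0..} then F (\<alpha> t) else F (\<beta> (- t)))) (at t within UNIV)"
    have "(if t \<in> {0..} then F (\<alpha> t) else F (\<beta> (- t))) = F (\<gamma> t)" unfolding \<gamma>_def by simp
    then show ?thesis using h[of t] by simp
  qed
  moreover have "\<gamma> 0 = x0" unfolding \<gamma>_def \<alpha>_def by (simp add: picard_lim_0)
  ultimately show ?thesis by blast
qed



lemma smooth_facts:
  assumes "smooth_on U \<zeta>" "open U"
  shows "\<And>y. y \<in> U \<Longrightarrow> (\<zeta> has_derivative frechet_derivative \<zeta> (at y)) (at y)"
    and "\<And>v. continuous_on U (\<lambda>y. frechet_derivative \<zeta> (at y) v)"
proof -
  have "Ck_on (Suc (Suc 0)) U \<zeta>" using assms(1) unfolding smooth_on_def by blast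
  then have d: "\<zeta> differentiable_on U" and c: "\<And>v. (\<lambda>x. frechet_derivative \<zeta> (at x) v) differentiable_on U"
    by auto
  show "(\<zeta> has_derivative frechet_derivative \<zeta> (at y)) (at y)" if "y \<in> U" for y
  proof -
    have "\<zeta> differentiable (at y within U)" using d that unfolding differentiable_on_def by blast
    then have "\<zeta> differentiable (at y)" using at_within_open[OF that assms(2)] by simp
    then show ?thesis using frechet_derivative_works by blast
  qed
  show "continuous_on U (\<lambda>y. frechet_derivative \<zeta> (at y) v)" for v
    using c differentiable_imp_continuous_on by blast
qed

lemma lipschitz_sphere:
  fixes \<zeta> :: "real^4 \<Rightarrow> real^4"
  assumes "smooth_on U \<zeta>" "open U" "sphere (0::real^4) 1 \<subseteq> U"
  obtains L where "L-lipschitz_on (sphere 0 1) \<zeta>"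
proof -
  note sf = smooth_facts[OF assms(1,2)]
  define f' where "f' = (\<lambda>p::real\<times>(real^4). Blinfun (frechet_derivative \<zeta> (at (snd p))))"
  have bl: "bounded_linear (frechet_derivative \<zeta> (at y))" if "y \<in> U" for y
    using sf(1)[OF that] has_derivative_bounded_linear by blast
  have ll: "local_lipschitz UNIV U (\<lambda>t::real. \<zeta>)"
  proof (rule c1_implies_local_lipschitz[where f'=f'])
    fix t :: real and x assume "x \<in> U"
    then show "(\<zeta> has_derivative blinfun_apply (f' (t, x))) (at x)"
      unfolding f'_def using sf(1) bl by (simp add: bounded_linear_Blinfun_apply)
  next
    show "continuous_on (UNIV \<times> U) f'"
    proof (rule continuous_on_blinfun_componentwise)
      fix i :: "real^4"
      have "continuous_on (UNIV \<times> U) (\<lambda>p::real\<times>(real^4). frechet_derivative \<zeta> (at (snd p)) i)"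
        by (rule continuous_on_compose2[OF sf(2)[of i]]) (auto intro!: continuous_intros)
      then show "continuous_on (UNIV \<times> U) (\<lambda>x. blinfun_apply (f' x) i)"
        by (rule continuous_on_cong[THEN iffD1, rotated 2]) (auto simp: f'_def bl bounded_linear_Blinfun_apply)
    qed
  qed (use assms in auto)
  then have ll': "local_lipschitz {0::real} (sphere 0 1) (\<lambda>t::real. \<zeta>)"
    by (rule local_lipschitz_subset) (use assms in auto)
  obtain L where "\<And>t. t \<in> {0::real} \<Longrightarrow> L-lipschitz_on (sphere 0 1) \<zeta>"
    by (rule local_lipschitz_compact_implies_lipschitz[OF ll']) auto
  then show ?thesis using that by blast
qed

definition extF :: "(real^4 \<Rightarrow> real^4) \<Rightarrow> real^4 \<Rightarrow> real^4" where
  "extF \<zeta> y = norm y *\<^sub>R \<zeta> (y /\<^sub>R norm y)"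

lemma norm_div_sphere: "y \<noteq> 0 \<Longrightarrow> (y::real^4) /\<^sub>R norm y \<in> sphere 0 1"
  by simp

lemma key_ineq:
  fixes y y' :: "real^4"
  assumes "y \<noteq> 0" "y' \<noteq> 0"
  shows "norm y' * norm (y /\<^sub>R norm y - y' /\<^sub>R norm y') \<le> 2 * norm (y - y')"
proof -
  have eqn: "norm y' *\<^sub>R (y /\<^sub>R norm y - y' /\<^sub>R norm y') = (y - y') + ((norm y' - norm y) / norm y) *\<^sub>R y"
  proof -
    have e: "norm y' / norm y = 1 + (norm y' - norm y) / norm y" using assms by (simp add: field_simps)
    have "norm y' *\<^sub>R (y /\<^sub>R norm y - y' /\<^sub>R norm y') = (norm y' / norm y) *\<^sub>R y - y'"
      using assms by (simp add: scaleR_diff_right divide_inverse_commute)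
    also have "\<dots> = (y - y') + ((norm y' - norm y) / norm y) *\<^sub>R y"
      by (simp only: e scaleR_add_left) simp
    finally show ?thesis .
  qed
  then have "norm y' * norm (y /\<^sub>R norm y - y' /\<^sub>R norm y') = norm ((y - y') + ((norm y' - norm y) / norm y) *\<^sub>R y)"
  proof -
    have "norm y' * norm (y /\<^sub>R norm y - y' /\<^sub>R norm y') = norm (norm y' *\<^sub>R (y /\<^sub>R norm y - y' /\<^sub>R norm y'))"
      by simp
    then show ?thesis by (simp only: eqn)
  qed
  also have "\<dots> \<le> norm (y - y') + norm (((norm y' - norm y) / norm y) *\<^sub>R y)"
    by (rule norm_triangle_ineq)
  also have "norm (((norm y' - norm y) / norm y) *\<^sub>R y) = \<bar>norm y' - norm y\<bar>"
    using assms by simp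
  also have "\<bar>norm y' - norm y\<bar> \<le> norm (y - y')"
    using norm_triangle_ineq3[of y' y] by (simp add: norm_minus_commute)
  finally show ?thesis by simp
qed

lemma extF_lipschitz:
  assumes L: "L-lipschitz_on (sphere 0 1) \<zeta>" and unit: "\<forall>x\<in>sphere 0 1. norm (\<zeta> x) = 1"
  shows "(1 + 2*L)-lipschitz_on UNIV (extF \<zeta>)"
proof (rule lipschitz_onI)
  have L0: "0 \<le> L" using L lipschitz_on_nonneg by blast
  show "0 \<le> 1 + 2*L" using L0 by simp
  have nF: "norm (extF \<zeta> y) = norm y" for y
    by (cases "y = 0") (auto simp: extF_def unit)
  fix y y' :: "real^4"
  show "dist (extF \<zeta> y) (extF \<zeta> y') \<le> (1 + 2*L) * dist y y'"
  proof (cases "y = 0 \<or> y' = 0")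
    case True
    then have "dist (extF \<zeta> y) (extF \<zeta> y') = dist y y'"
      using nF[of y] nF[of y'] by (auto simp: dist_norm norm_minus_commute extF_def[of _ 0])
    moreover have "dist y y' \<le> (1 + 2*L) * dist y y'"
      using mult_nonneg_nonneg[OF L0 zero_le_dist[of y y']] by (simp add: algebra_simps)
    ultimately show ?thesis by simp
  next
    case False
    define u where "u = y /\<^sub>R norm y"
    define u' where "u' = y' /\<^sub>R norm y'"
    have us: "u \<in> sphere 0 1" "u' \<in> sphere 0 1" using False by (auto simp: u_def u'_def)
    have "extF \<zeta> y - extF \<zeta> y' = (norm y - norm y') *\<^sub>R \<zeta> u + norm y' *\<^sub>R (\<zeta> u - \<zeta> u')"
      by (simp add: extF_def u_def u'_def algebra_simps)
    then have "norm (extF \<zeta> y - extF \<zeta> y') \<le> norm ((norm y - norm y') *\<^sub>R \<zeta> u) + norm (norm y' *\<^sub>R (\<zeta> u - \<zeta> u'))"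
      by (simp only: norm_triangle_ineq)
    also have "norm ((norm y - norm y') *\<^sub>R \<zeta> u) = \<bar>norm y - norm y'\<bar>" using us unit by simp
    also have "\<dots> \<le> norm (y - y')" by (rule norm_triangle_ineq3)
    also have "norm (norm y' *\<^sub>R (\<zeta> u - \<zeta> u')) = norm y' * dist (\<zeta> u) (\<zeta> u')"
      by (simp add: dist_norm)
    also have "\<dots> \<le> norm y' * (L * dist u u')"
      using lipschitz_onD[OF L us] by (intro mult_left_mono) auto
    also have "\<dots> = L * (norm y' * norm (u - u'))" by (simp add: dist_norm)
    also have "\<dots> \<le> L * (2 * norm (y - y'))"
      using key_ineq[of y y'] False L0 unfolding u_def u'_def by (intro mult_left_mono) auto
    finally show ?thesis by (simp add: dist_norm algebra_simps)
  qed
qed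

lemma extF_orth: "\<forall>x\<in>sphere 0 1. \<zeta> x \<bullet> x = 0 \<Longrightarrow> extF \<zeta> y \<bullet> y = 0"
proof (cases "y = 0")
  case False
  assume h: "\<forall>x\<in>sphere 0 1. \<zeta> x \<bullet> x = 0"
  have "y = norm y *\<^sub>R (y /\<^sub>R norm y)" using False by simp
  then have "extF \<zeta> y \<bullet> y = (norm y * norm y) * (\<zeta> (y /\<^sub>R norm y) \<bullet> (y /\<^sub>R norm y))"
    unfolding extF_def using False by (simp add: field_simps)
  also have "\<dots> = 0"
  proof -
    have h0: "\<zeta> (y /\<^sub>R norm y) \<bullet> (y /\<^sub>R norm y) = 0" using h norm_div_sphere[OF False] by blast
    show ?thesis by (simp only: h0 mult_zero_right)
  qed
  finally show ?thesis .
qed (simp add: extF_def)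

lemma extF_sphere: "x \<in> sphere 0 1 \<Longrightarrow> extF \<zeta> x = \<zeta> x"
  by (simp add: extF_def)

lemma curve_exists:
  assumes "smooth_unit_vf_S3 \<zeta>" "x \<in> sphere 0 1"
  shows "\<exists>\<gamma>. \<gamma> 0 = x \<and> integral_curve_S3 \<zeta> \<gamma>"
proof -
  obtain U where U: "open U" "sphere 0 1 \<subseteq> U" "smooth_on U \<zeta>"
    and tu: "\<forall>x\<in>sphere 0 1. \<zeta> x \<bullet> x = 0 \<and> norm (\<zeta> x) = 1"
    using assms(1) unfolding smooth_unit_vf_S3_def by blast
  obtain L where L: "L-lipschitz_on (sphere 0 1) \<zeta>"
    using lipschitz_sphere[OF U(3,1,2)] by blast
  have LF: "(1 + 2*L)-lipschitz_on UNIV (extF \<zeta>)"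
    by (rule extF_lipschitz[OF L]) (use tu in auto)
  obtain \<gamma> where g0: "\<gamma> 0 = x" and gd: "\<And>t. (\<gamma> has_vector_derivative extF \<zeta> (\<gamma> t)) (at t)"
    using global_sol[OF LF, of x] by blast
  have "\<exists>c. \<forall>t\<in>UNIV. \<gamma> t \<bullet> \<gamma> t = c"
  proof (rule has_derivative_zero_constant)
    fix t :: real
    have "((\<lambda>t. \<gamma> t \<bullet> \<gamma> t) has_derivative (\<lambda>h. \<gamma> t \<bullet> (h *\<^sub>R extF \<zeta> (\<gamma> t)) + (h *\<^sub>R extF \<zeta> (\<gamma> t)) \<bullet> \<gamma> t)) (at t)"
      using gd[of t] unfolding has_vector_derivative_def by (intro has_derivative_inner)
    moreover have "(\<lambda>h. \<gamma> t \<bullet> (h *\<^sub>R extF \<zeta> (\<gamma> t)) + (h *\<^sub>R extF \<zeta> (\<gamma> t)) \<bullet> \<gamma> t) = (\<lambda>h. 0)"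
      using extF_orth[of \<zeta> "\<gamma> t"] tu by (auto simp: inner_commute)
    ultimately show "((\<lambda>t. \<gamma> t \<bullet> \<gamma> t) has_derivative (\<lambda>h. 0)) (at t within UNIV)" by simp
  qed auto
  then obtain c where "\<And>t. \<gamma> t \<bullet> \<gamma> t = c" by blast
  then have "\<gamma> t \<bullet> \<gamma> t = 1" for t using g0 assms(2) by (metis mem_sphere_0 norm_eq_1)
  then have sph: "\<gamma> t \<in> sphere 0 1" for t by (simp add: norm_eq_1)
  have "integral_curve_S3 \<zeta> \<gamma>"
    unfolding integral_curve_S3_def
  proof (intro allI conjI)
    fix t
    show "\<gamma> t \<in> sphere 0 1" by (rule sph)
    show "(\<gamma> has_vector_derivative \<zeta> (\<gamma> t)) (at t)" using gd[of t] extF_sphere[OF sph[of t]] by simp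
  qed
  then show ?thesis using g0 by blast
qed



lemma trig1: "(a::real) = cos s * (a * cos s + b * sin s) - sin s * (- a * sin s + b * cos s)"
  using sin_cos_squared_add[of s] by algebra
lemma trig2: "(b::real) = sin s * (a * cos s + b * sin s) + cos s * (- a * sin s + b * cos s)"
  using sin_cos_squared_add[of s] by algebra
lemma trig3: "(- a * sin s + b * cos s) ^ 2 + ((a::real) * cos s + b * sin s) ^ 2 = a ^ 2 + b ^ 2"
  using sin_cos_squared_add[of s] by algebra

lemma deriv_in_subspace:
  fixes \<gamma> :: "real \<Rightarrow> real^4"
  assumes "subspace P" "\<forall>t. \<gamma> t \<in> P" "(\<gamma> has_vector_derivative v) (at s)"
  shows "v \<in> P"
proof -
  obtain y z where y: "y \<in> span P" and z: "\<And>w. w \<in> span P \<Longrightarrow> orthogonal z w" and v: "v = y + z"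
    using orthogonal_subspace_decomp_exists[of P v] by metis
  have sP: "span P = P" using assms(1) by (rule span_eq_iff[THEN iffD2])
  have "((\<lambda>t. z \<bullet> \<gamma> t) has_derivative (\<lambda>h. z \<bullet> (h *\<^sub>R v))) (at s)"
    using assms(3) unfolding has_vector_derivative_def by (rule has_derivative_inner_right)
  moreover have "(\<lambda>t. z \<bullet> \<gamma> t) = (\<lambda>t. 0)" using z assms(2) sP by (auto simp: orthogonal_def)
  then have "((\<lambda>t. z \<bullet> \<gamma> t) has_derivative (\<lambda>h. 0)) (at s)" by simp
  ultimately have "(\<lambda>h. z \<bullet> (h *\<^sub>R v)) = (\<lambda>h. 0)" by (rule has_derivative_unique)
  then have "z \<bullet> v = 0" by (metis inner_scaleR_right mult_1)
  moreover have "z \<bullet> y = 0" using z y by (simp add: orthogonal_def)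
  ultimately have "z \<bullet> z = 0" using v by (simp add: inner_add_right)
  then have "z = 0" by simp
  then show ?thesis using v y sP by simp
qed

lemma span2_decomp:
  fixes x z y :: "real^4"
  assumes "y \<in> span {x, z}" "x \<bullet> x = 1" "z \<bullet> z = 1" "x \<bullet> z = 0"
  shows "y = (y \<bullet> x) *\<^sub>R x + (y \<bullet> z) *\<^sub>R z"
proof -
  obtain k where "y - k *\<^sub>R x \<in> span {z}" using assms(1) span_breakdown_eq by blast
  then obtain m where "y - k *\<^sub>R x = m *\<^sub>R z" by (auto simp: span_singleton)
  then have y: "y = k *\<^sub>R x + m *\<^sub>R z" by (simp add: algebra_simps)
  have zx: "z \<bullet> x = 0" using assms(4) by (simp add: inner_commute)
  have "y \<bullet> x = k" "y \<bullet> z = m" using assms(2-4) zx unfolding y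
    by (simp_all add: inner_add_left)
  then show ?thesis using y by simp
qed

lemma dim_span2:
  fixes x z :: "real^4"
  assumes "x \<bullet> x = 1" "z \<bullet> z = 1" "x \<bullet> z = 0"
  shows "dim (span {x, z}) = 2"
proof -
  have xz: "x \<noteq> z" using assms by auto
  have "independent {x, z}"
    by (rule pairwise_orthogonal_independent)
      (use assms in \<open>auto simp: pairwise_def orthogonal_def inner_commute\<close>)
  then have "dim {x, z} = card {x, z}" by (rule dim_eq_card_independent)
  then show ?thesis using xz by simp
qed

lemma great_identity:
  assumes sm: "smooth_unit_vf_S3 \<zeta>"
    and gc: "\<forall>\<gamma>. integral_curve_S3 \<zeta> \<gamma> \<longrightarrow> great_circle (range \<gamma>)"
    and x: "x \<in> sphere 0 1"
  shows "\<zeta> (cos t *\<^sub>R x + sin t *\<^sub>R \<zeta> x) = (- sin t) *\<^sub>R x + cos t *\<^sub>R \<zeta> x"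
proof -
  obtain U where U: "open U" "sphere 0 1 \<subseteq> U" "smooth_on U \<zeta>"
    and tu: "\<And>y. y \<in> sphere 0 1 \<Longrightarrow> \<zeta> y \<bullet> y = 0 \<and> norm (\<zeta> y) = 1"
    using sm unfolding smooth_unit_vf_S3_def by blast
  have cz: "continuous_on U \<zeta>"
  proof -
    have "Ck_on (Suc (Suc 0)) U \<zeta>" using U(3) unfolding smooth_on_def by blast
    then have "\<zeta> differentiable_on U" by simp
    then show ?thesis by (rule differentiable_imp_continuous_on)
  qed
  obtain \<gamma> where g0: "\<gamma> 0 = x" and ic: "integral_curve_S3 \<zeta> \<gamma>"
    using curve_exists[OF sm x] by blast
  obtain P where P: "subspace P" "dim P = 2" and rg: "range \<gamma> = sphere 0 1 \<inter> P"
    using gc ic unfolding great_circle_def by blast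
  have gP: "\<forall>t. \<gamma> t \<in> P" using rg by blast
  have zP: "\<zeta> y \<in> P" if "y \<in> sphere 0 1 \<inter> P" for y
  proof -
    have "y \<in> range \<gamma>" using that rg by simp
    then obtain s where "y = \<gamma> s" by blast
    then show ?thesis using deriv_in_subspace[OF P(1) gP] ic unfolding integral_curve_S3_def by blast
  qed
  define z where "z = \<zeta> x"
  have xP: "x \<in> P" using gP g0 by (auto simp del: g0 dest: spec[of _ 0])
  have zP': "z \<in> P" unfolding z_def using zP x xP by blast
  have xx: "x \<bullet> x = 1" using x by (simp add: norm_eq_1[symmetric])
  have zz: "z \<bullet> z = 1" using tu[OF x] unfolding z_def by (simp add: norm_eq_1[symmetric])
  have xz: "x \<bullet> z = 0" using tu[OF x] unfolding z_def by (simp add: inner_commute)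
  have Pspan: "span {x, z} = P"
  proof (rule subspace_dim_equal[OF subspace_span P(1)])
    show "span {x, z} \<subseteq> P" using span_minimal[of "{x,z}" P] P(1) xP zP' by blast
    show "dim P \<le> dim (span {x, z})" using P(2) dim_span2[OF xx zz xz] by simp
  qed
  define c where "c = (\<lambda>s. cos s *\<^sub>R x + sin s *\<^sub>R z)"
  define w where "w = (\<lambda>s. (- sin s) *\<^sub>R x + cos s *\<^sub>R z)"
  have cs: "c s \<in> sphere 0 1" for s
  proof -
    have zx: "z \<bullet> x = 0" using xz by (simp add: inner_commute)
    have "c s \<bullet> c s = (cos s)^2 + (sin s)^2" unfolding c_def using xx zz xz zx
      by (simp add: inner_add_left inner_add_right power2_eq_square)
    then have "c s \<bullet> c s = 1" by simp
    then show ?thesis by (simp add: norm_eq_1)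
  qed
  have cP: "c s \<in> P" for s unfolding c_def using P(1) xP zP' by (simp add: subspace_add subspace_scale)
  define a where "a = (\<lambda>s. \<zeta> (c s) \<bullet> x)"
  define b where "b = (\<lambda>s. \<zeta> (c s) \<bullet> z)"
  have dec: "\<zeta> (c s) = a s *\<^sub>R x + b s *\<^sub>R z" for s
    unfolding a_def b_def using span2_decomp[OF _ xx zz xz, of "\<zeta> (c s)"] zP[of "c s"] cs cP Pspan by auto
  have orth: "a s * cos s + b s * sin s = 0" for s
  proof -
    have "\<zeta> (c s) \<bullet> c s = 0" using tu[OF cs] by simp
    then show ?thesis unfolding c_def a_def b_def by (simp add: inner_add_right mult.commute)
  qed
  have unit: "a s ^ 2 + b s ^ 2 = 1" for s
  proof -
    have "\<zeta> (c s) \<bullet> \<zeta> (c s) = 1" using tu[OF cs[of s]] by (simp add: norm_eq_1[symmetric])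
    then show ?thesis unfolding dec[of s] using xx zz xz
      by (simp add: inner_add_left inner_add_right inner_commute power2_eq_square)
  qed
  define f where "f = (\<lambda>s. \<zeta> (c s) \<bullet> w s)"
  have fab: "f s = - a s * sin s + b s * cos s" for s
    unfolding f_def w_def a_def b_def by (simp add: inner_add_right inner_diff_right mult.commute)
  have fnz: "f s \<noteq> 0" for s
  proof
    assume "f s = 0"
    then have e1: "- a s * sin s + b s * cos s = 0" using fab by simp
    have "a s = cos s * (a s * cos s + b s * sin s) - sin s * (- a s * sin s + b s * cos s)"
      by (rule trig1)
    then have "a s = 0" using e1 orth[of s] by simp
    moreover have "b s = sin s * (a s * cos s + b s * sin s) + cos s * (- a s * sin s + b s * cos s)"
      by (rule trig2)
    then have "b s = 0" using e1 orth[of s] by simp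
    ultimately show False using unit[of s] by simp
  qed
  have fc: "continuous_on UNIV f"
  proof -
    have "continuous_on UNIV c" unfolding c_def by (intro continuous_intros)
    then have "continuous_on UNIV (\<lambda>s. \<zeta> (c s))"
      by (rule continuous_on_compose2[OF cz]) (use cs U(2) in blast)
    then show ?thesis unfolding f_def w_def by (intro continuous_intros)
  qed
  have f0: "f 0 = 1" unfolding f_def c_def w_def z_def using zz z_def by simp
  have fpos: "f s > 0" for s
  proof (rule ccontr)
    assume "\<not> f s > 0"
    then have fs: "f s \<le> 0" by simp
    show False
    proof (cases "0 \<le> s")
      case True
      then obtain r where "f r = 0"
        using IVT2'[of f s 0 0] fs f0 continuous_on_subset[OF fc, of "{0..s}"] by auto
      then show False using fnz by blast
    next
      case False
      then obtain r where "f r = 0"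
        using IVT'[of f s 0 0] fs f0 continuous_on_subset[OF fc, of "{s..0}"] False by auto
      then show False using fnz by blast
    qed
  qed
  have "f t ^ 2 + (a t * cos t + b t * sin t) ^ 2 = a t ^ 2 + b t ^ 2"
    unfolding fab by (rule trig3)
  then have "f t ^ 2 = 1" using unit[of t] orth[of t] by simp
  then have f1: "f t = 1" using fpos[of t] by (simp add: power2_eq_1_iff)
  have "a t = cos t * (a t * cos t + b t * sin t) - sin t * (- a t * sin t + b t * cos t)"
    by (rule trig1)
  then have at: "a t = - sin t" using f1 fab[of t] orth[of t] by simp
  have "b t = sin t * (a t * cos t + b t * sin t) + cos t * (- a t * sin t + b t * cos t)"
    by (rule trig2)
  then have bt: "b t = cos t" using f1 fab[of t] orth[of t] by simp
  show ?thesis using dec[of t] at bt unfolding c_def z_def by simp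
qed



lemma circ_deriv:
  "((\<lambda>s. cos s *\<^sub>R a + sin s *\<^sub>R b) has_vector_derivative ((- sin s) *\<^sub>R a + cos s *\<^sub>R b)) (at s)"
  by (auto intro!: derivative_eq_intros)

lemma chain_vec:
  assumes "(\<zeta> has_derivative D) (at (c s))" "(c has_vector_derivative v) (at s)"
  shows "((\<lambda>r. \<zeta> (c r)) has_vector_derivative D v) (at s)"
proof -
  have lin: "linear D" using assms(1) has_derivative_linear by blast
  have "((\<lambda>r. \<zeta> (c r)) has_derivative (\<lambda>h. D (h *\<^sub>R v))) (at s)"
    using has_derivative_compose[of c "\<lambda>h. h *\<^sub>R v" s UNIV \<zeta> D] assms
    unfolding has_vector_derivative_def by simp
  moreover have "(\<lambda>h. D (h *\<^sub>R v)) = (\<lambda>h. h *\<^sub>R D v)"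
    using lin by (auto simp: linear_scale)
  ultimately show ?thesis unfolding has_vector_derivative_def by simp
qed

lemma inner_const_deriv:
  fixes f g :: "real \<Rightarrow> real^4"
  assumes "(f has_vector_derivative f') (at s)" "(g has_vector_derivative g') (at s)"
    and "\<And>r. f r \<bullet> g r = k"
  shows "f s \<bullet> g' + f' \<bullet> g s = 0"
proof -
  have "((\<lambda>r. f r \<bullet> g r) has_derivative (\<lambda>h. f s \<bullet> (h *\<^sub>R g') + (h *\<^sub>R f') \<bullet> g s)) (at s)"
    using assms(1,2) unfolding has_vector_derivative_def by (rule has_derivative_inner)
  moreover have "((\<lambda>r. f r \<bullet> g r) has_derivative (\<lambda>h. 0)) (at s)"
    using assms(3) by simp
  ultimately have "(\<lambda>h. f s \<bullet> (h *\<^sub>R g') + (h *\<^sub>R f') \<bullet> g s) = (\<lambda>h. 0)"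
    by (rule has_derivative_unique)
  from fun_cong[OF this, of 1] show ?thesis by simp
qed

lemma circle_on_sphere:
  fixes x u :: "real^4"
  assumes "norm x = 1" "norm u = 1" "u \<bullet> x = 0"
  shows "cos s *\<^sub>R x + sin s *\<^sub>R u \<in> sphere 0 1"
proof -
  have xx: "x \<bullet> x = 1" "u \<bullet> u = 1" using assms(1,2) by (simp_all add: norm_eq_1[symmetric])
  have xu: "x \<bullet> u = 0" using assms(3) by (simp add: inner_commute)
  have "(cos s *\<^sub>R x + sin s *\<^sub>R u) \<bullet> (cos s *\<^sub>R x + sin s *\<^sub>R u) = (cos s)^2 + (sin s)^2"
    using xx xu assms(3) by (simp add: inner_add_left inner_add_right power2_eq_square)
  then have "(cos s *\<^sub>R x + sin s *\<^sub>R u) \<bullet> (cos s *\<^sub>R x + sin s *\<^sub>R u) = 1" by simp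
  then show ?thesis by (simp add: norm_eq_1)
qed

lemma tangent_facts:
  fixes \<zeta> :: "real^4 \<Rightarrow> real^4"
  assumes dz: "\<And>y. y \<in> sphere 0 1 \<Longrightarrow> (\<zeta> has_derivative Dz y) (at y)"
    and tu: "\<And>y. y \<in> sphere 0 1 \<Longrightarrow> \<zeta> y \<bullet> y = 0 \<and> norm (\<zeta> y) = 1"
    and x0: "x0 \<in> sphere 0 1" and u: "norm u = 1" "u \<bullet> x0 = 0"
  shows "Dz x0 u \<bullet> x0 = - (\<zeta> x0 \<bullet> u)" and "Dz x0 u \<bullet> \<zeta> x0 = 0"
proof -
  define c where "c = (\<lambda>s. cos s *\<^sub>R x0 + sin s *\<^sub>R u)"
  have cs: "c s \<in> sphere 0 1" for s unfolding c_def
    by (rule circle_on_sphere) (use x0 u in auto)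
  have c0: "c 0 = x0" unfolding c_def by simp
  have dc: "(c has_vector_derivative u) (at 0)"
    using circ_deriv[of x0 u 0] unfolding c_def by simp
  have dzc: "((\<lambda>r. \<zeta> (c r)) has_vector_derivative Dz x0 u) (at 0)"
    by (rule chain_vec[OF _ dc]) (use dz x0 c0 in simp)
  have "\<zeta> (c 0) \<bullet> u + Dz x0 u \<bullet> c 0 = 0"
    by (rule inner_const_deriv[OF dzc dc, where k=0]) (use tu cs in auto)
  then show "Dz x0 u \<bullet> x0 = - (\<zeta> x0 \<bullet> u)" using c0 by simp
  have "\<zeta> (c 0) \<bullet> Dz x0 u + Dz x0 u \<bullet> \<zeta> (c 0) = 0"
  proof (rule inner_const_deriv[OF dzc dzc, where k=1])
    fix r show "\<zeta> (c r) \<bullet> \<zeta> (c r) = 1" using tu[OF cs[of r]] by (simp add: norm_eq_1[symmetric])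
  qed
  then show "Dz x0 u \<bullet> \<zeta> x0 = 0" using c0 by (simp add: inner_commute)
qed

lemma no_eigen:
  fixes \<zeta> :: "real^4 \<Rightarrow> real^4"
  assumes sm: "smooth_unit_vf_S3 \<zeta>"
    and gc: "\<forall>\<gamma>. integral_curve_S3 \<zeta> \<gamma> \<longrightarrow> great_circle (range \<gamma>)"
    and dz: "\<And>y. y \<in> sphere 0 1 \<Longrightarrow> (\<zeta> has_derivative Dz y) (at y)"
    and tu: "\<And>y. y \<in> sphere 0 1 \<Longrightarrow> \<zeta> y \<bullet> y = 0 \<and> norm (\<zeta> y) = 1"
    and x0: "x0 \<in> sphere 0 1" and v: "norm v = 1" "v \<bullet> x0 = 0" "v \<bullet> \<zeta> x0 = 0"
    and eig: "Dz x0 v = l *\<^sub>R v"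
  shows False
proof -
  define r where "r = sqrt (1 + l^2)"
  have r: "r > 0" unfolding r_def by (simp add: add_pos_nonneg)
  have r2: "r^2 = 1 + l^2" unfolding r_def by simp
  have "(- l / r)^2 + (1 / r)^2 = (l^2 + 1) / r^2" by (simp add: power_divide add_divide_distrib)
  also have "\<dots> = 1" using r2 r by (simp add: add.commute) (metis power2_less_eq_zero_iff not_le zero_less_power2 r less_irrefl)
  finally have "(- l / r)^2 + (1 / r)^2 = 1" .
  then obtain t0 where ct: "- l / r = cos t0" and st: "1 / r = sin t0"
    using sincos_total_2pi by metis
  define c where "c = (\<lambda>s. cos s *\<^sub>R x0 + sin s *\<^sub>R v)"
  have cs: "c s \<in> sphere 0 1" for s unfolding c_def
    by (rule circle_on_sphere) (use x0 v in auto)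
  have c0: "c 0 = x0" unfolding c_def by simp
  have dc: "(c has_vector_derivative v) (at 0)"
    using circ_deriv[of x0 v 0] unfolding c_def by simp
  have dzc: "((\<lambda>s. \<zeta> (c s)) has_vector_derivative l *\<^sub>R v) (at 0)"
    using chain_vec[OF _ dc, of \<zeta> "Dz x0"] dz x0 c0 eig by simp
  define \<Phi> where "\<Phi> = (\<lambda>s. cos t0 *\<^sub>R c s + sin t0 *\<^sub>R \<zeta> (c s))"
  have G: "\<zeta> (\<Phi> s) = (- sin t0) *\<^sub>R c s + cos t0 *\<^sub>R \<zeta> (c s)" for s
    unfolding \<Phi>_def by (rule great_identity[OF sm gc cs])
  have dPhi: "(\<Phi> has_vector_derivative (cos t0 + l * sin t0) *\<^sub>R v) (at 0)"
  proof -
    have "(\<Phi> has_vector_derivative cos t0 *\<^sub>R v + sin t0 *\<^sub>R (l *\<^sub>R v)) (at 0)"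
      unfolding \<Phi>_def
      using has_vector_derivative_add[OF has_vector_derivative_scaleR[OF DERIV_const dc] has_vector_derivative_scaleR[OF DERIV_const dzc]]
      by simp
    then show ?thesis by (simp add: algebra_simps)
  qed
  have "cos t0 + l * sin t0 = 0" unfolding ct[symmetric] st[symmetric] by simp
  then have dPhi0: "(\<Phi> has_vector_derivative 0) (at 0)" using dPhi by simp
  have P0: "\<Phi> 0 \<in> sphere 0 1"
    unfolding \<Phi>_def c0 by (rule circle_on_sphere) (use x0 tu[OF x0] in \<open>auto simp: inner_commute\<close>)
  have d1: "((\<lambda>s. \<zeta> (\<Phi> s)) has_vector_derivative Dz (\<Phi> 0) 0) (at 0)"
    by (rule chain_vec[OF dz[OF P0] dPhi0])
  have lin: "linear (Dz (\<Phi> 0))" using dz[OF P0] has_derivative_linear by blast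
  then have d1': "((\<lambda>s. \<zeta> (\<Phi> s)) has_vector_derivative 0) (at 0)" using d1 linear_0 by fastforce
  have d2: "((\<lambda>s. (- sin t0) *\<^sub>R c s + cos t0 *\<^sub>R \<zeta> (c s)) has_vector_derivative
      (- sin t0) *\<^sub>R v + cos t0 *\<^sub>R (l *\<^sub>R v)) (at 0)"
    using has_vector_derivative_add[OF has_vector_derivative_scaleR[OF DERIV_const[of "- sin t0"] dc] has_vector_derivative_scaleR[OF DERIV_const[of "cos t0"] dzc]]
    by (simp only: scaleR_zero_left add_0_right)
  have eqf: "(\<lambda>s. \<zeta> (\<Phi> s)) = (\<lambda>s. (- sin t0) *\<^sub>R c s + cos t0 *\<^sub>R \<zeta> (c s))" using G by auto
  have d1'': "((\<lambda>s. (- sin t0) *\<^sub>R c s + cos t0 *\<^sub>R \<zeta> (c s)) has_vector_derivative 0) (at 0)"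
    using d1' unfolding eqf .
  have "0 = (- sin t0) *\<^sub>R v + cos t0 *\<^sub>R (l *\<^sub>R v)"
    by (rule vector_derivative_unique_at[OF d1'' d2])
  then have "(- sin t0 + cos t0 * l) *\<^sub>R v = 0" by (simp add: algebra_simps) (metis eq_commute)
  moreover have "v \<noteq> 0" using v by auto
  ultimately have "- sin t0 + cos t0 * l = 0" by simp
  then have "- 1 / r - l * l / r = 0" unfolding ct[symmetric] st[symmetric] by (simp add: algebra_simps)
  then have "1 + l * l = 0" using r by (simp add: field_simps)
  moreover have "0 \<le> l * l" by simp
  ultimately show False by linarith
qed



lemma complete_basis:
  fixes x z :: "real^4"
  assumes xx: "x \<bullet> x = 1" and zz: "z \<bullet> z = 1" and xz: "x \<bullet> z = 0"
  obtains e1 e2 where "e1 \<bullet> e1 = 1" "e2 \<bullet> e2 = 1" "e1 \<bullet> e2 = 0" "e1 \<bullet> x = 0" "e1 \<bullet> z = 0"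
    "e2 \<bullet> x = 0" "e2 \<bullet> z = 0"
    "\<And>y. y = (y \<bullet> x) *\<^sub>R x + (y \<bullet> z) *\<^sub>R z + (y \<bullet> e1) *\<^sub>R e1 + (y \<bullet> e2) *\<^sub>R e2"
proof -
  have "dim {x, z} \<le> card {x, z}" by (rule dim_le_card) (auto intro: span_base)
  also have "\<dots> \<le> 2" by (simp add: card_insert_le_m1)
  finally have "dim {x, z} < DIM(real^4)" by simp
  then obtain f1 where f1: "f1 \<noteq> 0" "\<And>y. y \<in> span {x, z} \<Longrightarrow> orthogonal f1 y"
    using orthogonal_to_subspace_exists by blast
  define e1 where "e1 = f1 /\<^sub>R norm f1"
  have "norm e1 = 1" unfolding e1_def using f1(1) by simp
  then have e1e1: "e1 \<bullet> e1 = 1" using norm_eq_1 by blast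
  have e1x: "e1 \<bullet> x = 0" "e1 \<bullet> z = 0" unfolding e1_def
    using f1(2)[of x] f1(2)[of z] by (auto simp: orthogonal_def span_base)
  have "dim {x, z, e1} \<le> card {x, z, e1}" by (rule dim_le_card) (auto intro: span_base)
  also have "\<dots> \<le> 3" by (simp add: card_insert_le_m1)
  finally have "dim {x, z, e1} < DIM(real^4)" by simp
  then obtain f2 where f2: "f2 \<noteq> 0" "\<And>y. y \<in> span {x, z, e1} \<Longrightarrow> orthogonal f2 y"
    using orthogonal_to_subspace_exists by blast
  define e2 where "e2 = f2 /\<^sub>R norm f2"
  have "norm e2 = 1" unfolding e2_def using f2(1) by simp
  then have e2e2: "e2 \<bullet> e2 = 1" using norm_eq_1 by blast
  have e2x: "e2 \<bullet> x = 0" "e2 \<bullet> z = 0" "e2 \<bullet> e1 = 0" unfolding e2_def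
    using f2(2)[of x] f2(2)[of z] f2(2)[of e1] by (auto simp: orthogonal_def span_base)
  have zx: "z \<bullet> x = 0" using xz by (simp add: inner_commute)
  have sym: "x \<bullet> e1 = 0" "z \<bullet> e1 = 0" "x \<bullet> e2 = 0" "z \<bullet> e2 = 0" "e1 \<bullet> e2 = 0"
    using e1x e2x by (simp_all add: inner_commute)
  note ips = xx zz xz zx e1e1 e2e2 e1x e2x sym
  define B where "B = {x, z, e1, e2}"
  have dist: "x \<noteq> z" "x \<noteq> e1" "x \<noteq> e2" "z \<noteq> e1" "z \<noteq> e2" "e1 \<noteq> e2"
    using ips by auto
  have cB: "card B = 4" unfolding B_def using dist by auto
  have indB: "independent B"
  proof (rule pairwise_orthogonal_independent)
    show "pairwise orthogonal B" unfolding B_def pairwise_def orthogonal_def using ips by auto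
    show "0 \<notin> B" unfolding B_def using ips by auto
  qed
  have spB: "UNIV \<subseteq> span B"
    using card_eq_dim[of B UNIV] indB cB by (simp add: B_def)
  have dec: "y = (y \<bullet> x) *\<^sub>R x + (y \<bullet> z) *\<^sub>R z + (y \<bullet> e1) *\<^sub>R e1 + (y \<bullet> e2) *\<^sub>R e2" for y
  proof -
    define r where "r = y - ((y \<bullet> x) *\<^sub>R x + (y \<bullet> z) *\<^sub>R z + (y \<bullet> e1) *\<^sub>R e1 + (y \<bullet> e2) *\<^sub>R e2)"
    have "orthogonal r b" if "b \<in> B" for b
      using that ips unfolding B_def r_def orthogonal_def
      by (auto simp: inner_diff_left inner_add_left)
    then have "orthogonal r r" using orthogonal_to_span[of r B r] spB by blast
    then have "r = 0" by (simp add: orthogonal_def)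
    then show ?thesis unfolding r_def by simp
  qed
  show ?thesis by (rule that[OF e1e1 e2e2 sym(5) e1x e2x(1,2) dec])
qed

lemma eig2:
  fixes a b c :: real
  shows "\<exists>p q l. (p \<noteq> 0 \<or> q \<noteq> 0) \<and> a*p + b*q = l*p \<and> b*p + c*q = l*q"
proof (cases "b = 0")
  case True
  then show ?thesis by (intro exI[of _ 1] exI[of _ 0] exI[of _ a]) simp
next
  case False
  define d where "d = (a - c) / 2"
  define s where "s = sqrt (d^2 + b^2)"
  define l where "l = (a + c) / 2 + s"
  have s2: "s^2 = d^2 + b^2" unfolding s_def by simp
  have la: "l - a = s - d" unfolding l_def d_def by (simp add: field_simps)
  have lc: "l - c = s + d" unfolding l_def d_def by (simp add: field_simps)
  have "(l - a) * (l - c) = s^2 - d^2" unfolding la lc by (simp add: algebra_simps power2_eq_square)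
  then have "(l - a) * (l - c) = b^2" using s2 by simp
  then have "b*b + c*(l - a) = l*(l - a)" by (simp add: algebra_simps power2_eq_square)
  moreover have "a*b + b*(l - a) = l*b" by (simp add: algebra_simps)
  ultimately show ?thesis using False by (intro exI[of _ b] exI[of _ "l - a"] exI[of _ l]) simp
qed

theorem mainTheorem9:
  fixes \<zeta> :: "real^4 \<Rightarrow> real^4"
  assumes "smooth_unit_vf_S3 \<zeta>"
    and "\<forall>x\<in>sphere 0 1. sphere_div \<zeta> x = 0"
    and "\<forall>\<gamma>. integral_curve_S3 \<zeta> \<gamma> \<longrightarrow> great_circle (range \<gamma>)"
  shows "\<forall>x\<in>sphere 0 1. wedge_nonzero_at \<zeta> x"
proof
  note sm = assms(1) and gc = assms(3)
  fix x0 :: "real^4" assume x0: "x0 \<in> sphere 0 1"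
  show "wedge_nonzero_at \<zeta> x0"
  proof (rule ccontr)
    assume nw: "\<not> wedge_nonzero_at \<zeta> x0"
    obtain U where U: "open U" "sphere 0 1 \<subseteq> U" "smooth_on U \<zeta>"
      and tu: "\<And>y. y \<in> sphere 0 1 \<Longrightarrow> \<zeta> y \<bullet> y = 0 \<and> norm (\<zeta> y) = 1"
      using sm unfolding smooth_unit_vf_S3_def by blast
    define Dz where "Dz = (\<lambda>y. frechet_derivative \<zeta> (at y))"
    have dz: "\<And>y. y \<in> sphere 0 1 \<Longrightarrow> (\<zeta> has_derivative Dz y) (at y)"
      unfolding Dz_def using smooth_facts(1)[OF U(3,1)] U(2) by blast
    define z0 where "z0 = \<zeta> x0"
    define D where "D = Dz x0"
    have lin: "linear D" unfolding D_def using dz[OF x0] has_derivative_linear by blast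
    have xx: "x0 \<bullet> x0 = 1" using x0 by (simp add: norm_eq_1[symmetric])
    have zz: "z0 \<bullet> z0 = 1" using tu[OF x0] unfolding z0_def by (simp add: norm_eq_1[symmetric])
    have zx: "z0 \<bullet> x0 = 0" using tu[OF x0] unfolding z0_def by simp
    have xz: "x0 \<bullet> z0 = 0" using zx by (simp add: inner_commute)
    obtain e1 e2 where e: "e1 \<bullet> e1 = 1" "e2 \<bullet> e2 = 1" "e1 \<bullet> e2 = 0" "e1 \<bullet> x0 = 0" "e1 \<bullet> z0 = 0"
      "e2 \<bullet> x0 = 0" "e2 \<bullet> z0 = 0"
      and dec: "\<And>y. y = (y \<bullet> x0) *\<^sub>R x0 + (y \<bullet> z0) *\<^sub>R z0 + (y \<bullet> e1) *\<^sub>R e1 + (y \<bullet> e2) *\<^sub>R e2"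
      using complete_basis[OF xx zz xz] by blast
    have n1: "norm e1 = 1" "norm e2 = 1" using e(1,2) norm_eq_1 by blast+
    have t1: "D e1 \<bullet> x0 = 0" "D e1 \<bullet> z0 = 0"
      using tangent_facts[OF dz tu x0 n1(1) e(4)] e(5) unfolding D_def z0_def by (simp_all add: inner_commute)
    have t2: "D e2 \<bullet> x0 = 0" "D e2 \<bullet> z0 = 0"
      using tangent_facts[OF dz tu x0 n1(2) e(6)] e(7) unfolding D_def z0_def by (simp_all add: inner_commute)
    define a where "a = D e1 \<bullet> e1"
    define b where "b = D e1 \<bullet> e2"
    define c where "c = D e2 \<bullet> e2"
    have "omega_wedge_domega \<zeta> x0 z0 e1 e2 = 0"
      using nw zx e(4,6) unfolding wedge_nonzero_at_def by blast
    then have "D e1 \<bullet> e2 - D e2 \<bullet> e1 = 0"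
      unfolding omega_wedge_domega_def dual_form_def d_dual_form_def D_def Dz_def z0_def[symmetric]
      using zz e(5,7) by (simp add: inner_commute)
    then have b': "D e2 \<bullet> e1 = b" unfolding b_def by simp
    have De1: "D e1 = a *\<^sub>R e1 + b *\<^sub>R e2" using dec[of "D e1"] t1 unfolding a_def b_def by simp
    have De2: "D e2 = b *\<^sub>R e1 + c *\<^sub>R e2" using dec[of "D e2"] t2 b' unfolding c_def by simp
    obtain p q l where pq: "p \<noteq> 0 \<or> q \<noteq> 0" and eq1: "a*p + b*q = l*p" and eq2: "b*p + c*q = l*q"
      using eig2[of a b c] by blast
    define v where "v = p *\<^sub>R e1 + q *\<^sub>R e2"
    have Dv: "D v = l *\<^sub>R v"
    proof -
      have "D v = p *\<^sub>R D e1 + q *\<^sub>R D e2" unfolding v_def using lin by (simp add: linear_add linear_scale)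
      also have "\<dots> = (a*p + b*q) *\<^sub>R e1 + (b*p + c*q) *\<^sub>R e2" unfolding De1 De2
        by (simp add: algebra_simps)
      also have "\<dots> = l *\<^sub>R v" unfolding eq1 eq2 v_def by (simp add: algebra_simps)
      finally show ?thesis .
    qed
    have e21: "e2 \<bullet> e1 = 0" using e(3) by (simp add: inner_commute)
    have "v \<bullet> v = p^2 + q^2" unfolding v_def using e(1,2,3) e21
      by (simp add: inner_add_left inner_add_right power2_eq_square)
    moreover have "p^2 + q^2 > 0" using pq by (auto simp: add_pos_nonneg add_nonneg_pos)
    ultimately have vnz: "v \<noteq> 0" by auto
    have vx: "v \<bullet> x0 = 0" "v \<bullet> z0 = 0" unfolding v_def using e by (simp_all add: inner_add_left)
    define v' where "v' = v /\<^sub>R norm v"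
    have nv': "norm v' = 1" unfolding v'_def using vnz by simp
    have vx': "v' \<bullet> x0 = 0" "v' \<bullet> \<zeta> x0 = 0" unfolding v'_def using vx z0_def by simp_all
    have Dv': "Dz x0 v' = l *\<^sub>R v'"
      unfolding v'_def D_def[symmetric] using lin Dv by (simp add: linear_scale)
    show False by (rule no_eigen[OF sm gc dz tu x0 nv' vx' Dv'])
  qed
qed


end
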